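(* For every $n \ge 1$, every extremal point $\rho$ of $\Gamma(n)$ satisfies $\mathrm{rank}(\rho) \le \sqrt{2n^2 - 1}$. Equivalently, $MR(n) \le \sqrt{2n^2-1}$.
   Context: A state $\rho$ on $M_n(\mathbb{C}) \otimes M_n(\mathbb{C})$ is a marginal tracial state if $\rho(A\otimes I) = \mathrm{tr}(A)$ and $\rho(I \otimes B) = \mathrm{tr}(B)$ for all $A,B \in M_n(\mathbb{C})$, where $\mathrm{tr}$ is the normalized trace. $\Gamma(n)$ is the convex set of all marginal tracial states on $M_n(\mathbb{C}) \otimes M_n(\mathbb{C})$. For a state $\rho$, $\mathrm{rank}(\rho)$ is the rank of its density matrix. $MR(n)$ denotes the maximum of $\mathrm{rank}(\rho)$ over all extremal points $\rho$ of $\Gamma(n)$. *)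

theory Defs
  imports "HOL-Analysis.Analysis"
begin

definition kron :: "complex^'n^'n \<Rightarrow> complex^'n^'n \<Rightarrow> complex^('n \<times> 'n)^('n \<times> 'n)" where
  "kron A B = (\<chi> p. \<chi> q. A $ fst p $ fst q * B $ snd p $ snd q)"

definition psd :: "complex^'k^'k \<Rightarrow> bool" where
  "psd D \<longleftrightarrow> (\<forall>x :: complex^'k.
      Im (\<Sum>i\<in>UNIV. cnj (x $ i) * (D *v x) $ i) = 0 \<and>
      0 \<le> Re (\<Sum>i\<in>UNIV. cnj (x $ i) * (D *v x) $ i))"

text \<open>Density matrix of a state: positive semidefinite with trace one.
  The state associated with D is X \<mapsto> trace (D ** X).\<close>
definition density :: "complex^'k^'k \<Rightarrow> bool" where
  "density D \<longleftrightarrow> psd D \<and> trace D = 1"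

definition ntr :: "complex^('n::finite)^'n \<Rightarrow> complex" where
  "ntr A = trace A / of_nat CARD('n)"

text \<open>Gamma(n), represented via density matrices: marginal tracial states on M_n \<otimes> M_n.\<close>
definition Gamma :: "(complex^('n::finite \<times> 'n)^('n \<times> 'n)) set" where
  "Gamma = {D. density D \<and>
     (\<forall>A :: complex^'n^'n. trace (D ** kron A (mat 1)) = ntr A) \<and>
     (\<forall>B :: complex^'n^'n. trace (D ** kron (mat 1) B) = ntr B)}"

end

theory Submission
  imports Defs
begin


definition bf :: "complex^'k^'k \<Rightarrow> complex^'k \<Rightarrow> complex^'k \<Rightarrow> complex" where
  "bf M y x = (\<Sum>i\<in>UNIV. cnj (y $ i) * (M *v x) $ i)"

lemma bf_expand: "bf M y x = (\<Sum>i\<in>UNIV. \<Sum>j\<in>UNIV. cnj (y $ i) * M$i$j * x$j)"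
  unfolding bf_def matrix_vector_mult_def by (simp add: sum_distrib_left mult.assoc)

lemma bf_add1: "bf M (y + z) x = bf M y x + bf M z x"
  unfolding bf_def by (simp add: distrib_right sum.distrib)
lemma bf_add2: "bf M y (x + z) = bf M y x + bf M y z"
  unfolding bf_def by (simp add: matrix_vector_right_distrib distrib_left sum.distrib)
lemma bf_smult1: "bf M (c *s y) x = cnj c * bf M y x"
  unfolding bf_def by (simp add: sum_distrib_left mult.assoc)
lemma bf_smult2: "bf M y (c *s x) = c * bf M y x"
  unfolding bf_expand by (simp add: sum_distrib_left algebra_simps)
lemma sum_delta_r: "(\<Sum>j\<in>(UNIV::'a::finite set). f j * (if j = a then b else 0)) = f a * (b::'b::comm_ring_1)"
proof -
  have "(\<Sum>j\<in>UNIV. f j * (if j = a then b else 0)) = (\<Sum>j\<in>UNIV. if j = a then f j * b else 0)"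
    by (rule sum.cong) auto
  then show ?thesis by simp
qed
lemma sum_delta_l: "(\<Sum>j\<in>(UNIV::'a::finite set). (if j = a then b else 0) * f j) = (b::'b::comm_ring_1) * f a"
  using sum_delta_r[of f a b] by (simp add: mult.commute)

lemma bf_axis: "bf M (axis i a) (axis j b) = cnj a * M$i$j * b"
proof -
  have "bf M (axis i a) (axis j b) = (\<Sum>k\<in>UNIV. (if k = i then cnj a else 0) * (\<Sum>l\<in>UNIV. M$k$l * (if l = j then b else 0)))"
    unfolding bf_expand by (intro sum.cong refl) (auto simp: axis_def sum_distrib_left mult.assoc)
  also have "\<dots> = cnj a * M$i$j * b" by (simp add: sum_delta_r sum_delta_l mult.assoc)
  finally show ?thesis .
qed

lemma psd_bf: "psd D \<longleftrightarrow> (\<forall>x. Im (bf D x x) = 0 \<and> 0 \<le> Re (bf D x x))"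
  unfolding psd_def bf_def by simp

lemma psd_herm:
  assumes "psd D" shows "D$i$j = cnj (D$j$i)"
proof -
  have q: "Im (bf D x x) = 0" for x using assms psd_bf by blast
  have e: "bf D (axis i 1 + axis j c) (axis i 1 + axis j c) = D$i$i + D$i$j * c + cnj c * D$j$i + cnj c * D$j$j * c" for c
    by (simp add: bf_add1 bf_add2 bf_axis)
  have ii: "Im (D$i$i) = 0" using q[of "axis i 1"] by (simp add: bf_axis)
  have jj: "Im (D$j$j) = 0" using q[of "axis j 1"] by (simp add: bf_axis)
  have 1: "Im (D$i$j) + Im (D$j$i) = 0" using q[of "axis i 1 + axis j 1"] e[of 1] ii jj by simp
  have 2: "Re (D$i$j) - Re (D$j$i) = 0" using q[of "axis i 1 + axis j \<i>"] e[of \<i>] ii jj by simp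
  show ?thesis using 1 2 by (simp add: complex_eq_iff)
qed

definition herm :: "complex^'k^'k \<Rightarrow> bool" where
  "herm D \<longleftrightarrow> (\<forall>i j. D$i$j = cnj (D$j$i))"

lemma psd_herm': "psd D \<Longrightarrow> herm D"
  unfolding herm_def using psd_herm by blast

lemma herm_cnj: "herm D \<Longrightarrow> cnj (D$i$j) = D$j$i"
  unfolding herm_def by (metis complex_cnj_cnj)

lemma herm_shift:
  assumes "herm D" shows "bf D x z = (\<Sum>j\<in>UNIV. cnj ((D *v x)$j) * z$j)"
proof -
  have "(\<Sum>j\<in>UNIV. cnj ((D *v x)$j) * z$j) = (\<Sum>j\<in>UNIV. \<Sum>i\<in>UNIV. cnj (x$i) * D$i$j * z$j)"
    using herm_cnj[OF assms] unfolding matrix_vector_mult_def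
    by (simp add: sum_distrib_right sum_distrib_left mult.commute mult.left_commute)
  also have "\<dots> = bf D x z" unfolding bf_expand by (rule sum.swap)
  finally show ?thesis by simp
qed

lemma bf_herm_sym:
  assumes "herm D" shows "bf D x y = cnj (bf D y x)"
proof -
  have "cnj (bf D y x) = (\<Sum>i\<in>UNIV. \<Sum>j\<in>UNIV. y$i * D$j$i * cnj (x$j))"
    unfolding bf_expand using herm_cnj[OF assms] by (simp add: mult.assoc)
  also have "\<dots> = (\<Sum>j\<in>UNIV. \<Sum>i\<in>UNIV. y$i * D$j$i * cnj (x$j))" by (rule sum.swap)
  also have "\<dots> = bf D x y" unfolding bf_expand by (simp add: mult.commute mult.left_commute)
  finally show ?thesis by simp
qed

lemma real_disc:
  fixes a b c :: real
  assumes "\<And>t. 0 \<le> a - 2*t*b + t^2*b*c" "0 \<le> b" "0 \<le> c"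
  shows "b \<le> a*c"
proof (cases "c > 0")
  case True
  have h: "0 \<le> a - 2*(inverse c)*b + (inverse c)^2*b*c" by (rule assms(1))
  have i: "inverse c * c = 1" using True by (intro left_inverse) linarith
  have "(inverse c)^2*b*c = inverse c * b" by (metis i power2_eq_square mult.assoc mult.commute mult_1_right)
  then have "0 \<le> a - inverse c * b" using h by linarith
  then have "c * (inverse c * b) \<le> c * a" using True by (intro mult_left_mono) linarith+
  moreover have "c * (inverse c * b) = b" by (metis i mult.assoc mult.commute mult_1_left)
  ultimately show ?thesis by (metis mult.commute)
next
  case False
  then have c: "c = 0" using assms(3) by linarith
  show ?thesis
  proof (rule ccontr)
    assume "\<not> b \<le> a*c"
    then have b: "b > 0" using c by simp
    have i: "inverse b * b = 1" using b by (intro left_inverse) linarith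
    define m where "m = \<bar>a\<bar> + 1"
    have am: "a < m" unfolding m_def by linarith
    have h: "0 \<le> a - 2*(m * inverse b)*b + (m * inverse b)^2*b*c" by (rule assms(1))
    have e: "2*(m * inverse b)*b = 2*m" by (metis i mult.assoc mult_1_right)
    have z: "(m * inverse b)^2*b*c = 0" using c by simp
    have "0 \<le> a - 2*m" using h unfolding e z by linarith
    moreover have "0 < m" unfolding m_def by simp
    ultimately show False using am by linarith
  qed
qed

lemma mult_cnj_self: "z * cnj z = of_real ((cmod z)^2)"
  by (rule complex_norm_square[symmetric])

lemma psd_real: "psd D \<Longrightarrow> bf D x x = of_real (Re (bf D x x))"
proof -
  assume "psd D"
  then have "Im (bf D x x) = 0" using psd_bf by blast
  then show ?thesis by (simp add: complex_eq_iff)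
qed

lemma cauchy_schwarz:
  assumes "psd D"
  shows "(cmod (bf D y x))^2 \<le> Re (bf D y y) * Re (bf D x x)"
proof -
  have h: "herm D" using assms by (rule psd_herm')
  define \<beta> where "\<beta> = bf D y x"
  define b where "b = (cmod \<beta>)^2"
  have disc: "0 \<le> Re (bf D y y) - 2*t*b + t^2*b*Re (bf D x x)" for t
  proof -
    define s where "s = - (of_real t * cnj \<beta>)"
    define w where "w = y + s *s x"
    define cx where "cx = Re (bf D x x)"
    have px: "bf D x x = of_real cx" unfolding cx_def using psd_real[OF assms, of x] .
    have bb: "\<beta> * cnj \<beta> = of_real b" unfolding b_def by (rule mult_cnj_self)
    have sb: "s * \<beta> = of_real (- t * b)"
    proof -
      have "s * \<beta> = - (of_real t * (\<beta> * cnj \<beta>))" unfolding s_def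
        by (simp only: mult_minus_left mult.assoc mult.commute[of "cnj \<beta>"])
      then show ?thesis unfolding bb by simp
    qed
    have ss: "cnj s * s = of_real (t^2 * b)"
    proof -
      have "cnj s * s = (of_real t * of_real t) * (\<beta> * cnj \<beta>)" unfolding s_def
        by (simp only: complex_cnj_minus complex_cnj_mult complex_cnj_cnj complex_cnj_complex_of_real
            minus_mult_minus mult.assoc mult.left_commute mult.commute[of "cnj \<beta>"])
      then show ?thesis unfolding bb by (simp add: power2_eq_square)
    qed
    have aux: "s * (cnj s * bf D x x) = (cnj s * s) * bf D x x" by (metis mult.assoc mult.commute)
    have xy: "bf D x y = cnj \<beta>" unfolding \<beta>_def using bf_herm_sym[OF h, of x y] .
    have "bf D w w = bf D y y + bf D y (s *s x) + bf D (s *s x) y + bf D (s *s x) (s *s x)"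
      unfolding w_def by (simp only: bf_add1 bf_add2 add_ac)
    also have "\<dots> = bf D y y + s * \<beta> + cnj s * cnj \<beta> + (cnj s * s) * bf D x x"
      unfolding bf_smult1 bf_smult2 xy \<beta>_def by (simp only: mult.assoc aux)
    finally have e: "bf D w w = bf D y y + s * \<beta> + cnj (s * \<beta>) + (cnj s * s) * bf D x x"
      by (simp only: complex_cnj_mult)
    have r1: "Re (s * \<beta>) = -t*b" unfolding sb by (simp only: Re_complex_of_real)
    have r2: "Re (cnj (s * \<beta>)) = -t*b" using r1 by simp
    have r3: "Re ((cnj s * s) * bf D x x) = t^2*b*cx" unfolding ss px by simp
    have "Re (bf D w w) = Re (bf D y y) + Re (s * \<beta>) + Re (cnj (s * \<beta>)) + Re ((cnj s * s) * bf D x x)"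
      unfolding e by (simp only: plus_complex.sel)
    then have "Re (bf D w w) = Re (bf D y y) - 2*t*b + t^2*b*cx" unfolding r1 r2 r3 by simp
    moreover have "0 \<le> Re (bf D w w)" using assms unfolding psd_bf by blast
    ultimately show ?thesis unfolding cx_def by simp
  qed
  have c0: "0 \<le> Re (bf D x x)" using assms psd_bf by blast
  have b0: "0 \<le> b" by (simp add: b_def)
  have "b \<le> Re (bf D y y) * Re (bf D x x)" by (rule real_disc[OF disc b0 c0])
  then show ?thesis by (simp add: b_def \<beta>_def)
qed

definition nsq :: "complex^'k \<Rightarrow> real" where
  "nsq y = (\<Sum>i\<in>UNIV. (cmod (y$i))^2)"

definition msum :: "complex^'k^'k \<Rightarrow> real" where
  "msum K = (\<Sum>i\<in>UNIV. \<Sum>j\<in>UNIV. cmod (K$i$j))"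

lemma nsq_nonneg: "0 \<le> nsq y"
  unfolding nsq_def by (intro sum_nonneg) simp

lemma msum_nonneg: "0 \<le> msum K"
  unfolding msum_def by (intro sum_nonneg) simp

lemma cmod_prod_le_nsq: "cmod (y$i) * cmod (y$j) \<le> nsq y"
proof -
  have a: "(cmod (y$i))^2 \<le> nsq y" unfolding nsq_def
    by (rule member_le_sum) auto
  have b: "(cmod (y$j))^2 \<le> nsq y" unfolding nsq_def
    by (rule member_le_sum) auto
  have "0 \<le> (cmod (y$i) - cmod (y$j))^2" by simp
  then have "2 * (cmod (y$i) * cmod (y$j)) \<le> (cmod (y$i))^2 + (cmod (y$j))^2"
    unfolding power2_diff by linarith
  then show ?thesis using a b by linarith
qed

lemma bf_bound: "cmod (bf K y y) \<le> msum K * nsq y"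
proof -
  have "cmod (bf K y y) \<le> (\<Sum>i\<in>UNIV. cmod (\<Sum>j\<in>UNIV. cnj (y $ i) * K$i$j * y$j))"
    unfolding bf_expand by (rule norm_sum)
  also have "\<dots> \<le> (\<Sum>i\<in>UNIV. \<Sum>j\<in>UNIV. cmod (cnj (y $ i) * K$i$j * y$j))"
    by (intro sum_mono norm_sum)
  also have "\<dots> \<le> (\<Sum>i\<in>UNIV. \<Sum>j\<in>UNIV. cmod (K$i$j) * nsq y)"
  proof (intro sum_mono)
    fix i j
    have "cmod (cnj (y $ i) * K$i$j * y$j) = cmod (K$i$j) * (cmod (y$i) * cmod (y$j))"
      by (simp add: norm_mult)
    also have "\<dots> \<le> cmod (K$i$j) * nsq y"
      by (intro mult_left_mono cmod_prod_le_nsq) simp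
    finally show "cmod (cnj (y $ i) * K$i$j * y$j) \<le> cmod (K$i$j) * nsq y" .
  qed
  also have "\<dots> = msum K * nsq y" unfolding msum_def by (simp add: sum_distrib_right)
  finally show ?thesis .
qed

lemma bf_D_Dx: "bf D (D *v x) x = of_real (nsq (D *v x))"
proof -
  have "bf D (D *v x) x = (\<Sum>i\<in>UNIV. of_real ((cmod ((D *v x)$i))^2))"
    unfolding bf_def by (intro sum.cong refl) (metis mult.commute mult_cnj_self)
  then show ?thesis unfolding nsq_def by simp
qed

lemma nsq_bound:
  assumes "psd D"
  shows "nsq (D *v x) \<le> msum D * Re (bf D x x)"
proof -
  define N where "N = nsq (D *v x)"
  have N0: "0 \<le> N" unfolding N_def by (rule nsq_nonneg)
  have R0: "0 \<le> Re (bf D x x)" using assms unfolding psd_bf by blast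
  have cs: "(cmod (bf D (D *v x) x))^2 \<le> Re (bf D (D *v x) (D *v x)) * Re (bf D x x)"
    by (rule cauchy_schwarz[OF assms])
  have l: "cmod (bf D (D *v x) x) = N" unfolding bf_D_Dx N_def using nsq_nonneg[of "D *v x"] by simp
  have "Re (bf D (D *v x) (D *v x)) \<le> msum D * N"
    unfolding N_def using bf_bound[of D "D *v x"] complex_Re_le_cmod order_trans by blast
  then have "Re (bf D (D *v x) (D *v x)) * Re (bf D x x) \<le> (msum D * N) * Re (bf D x x)"
    using R0 by (rule mult_right_mono)
  then have "N * N \<le> N * (msum D * Re (bf D x x))"
    using cs unfolding l by (simp add: power2_eq_square mult_ac)
  then show ?thesis
  proof (cases "N = 0")
    case True then show ?thesis unfolding N_def[symmetric] using R0 msum_nonneg[of D] by (simp add: mult_nonneg_nonneg)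
  next
    case False
    then have "N > 0" using N0 by simp
    then show ?thesis unfolding N_def[symmetric] using \<open>N * N \<le> N * (msum D * Re (bf D x x))\<close>
      by (simp add: mult_le_cancel_left_pos)
  qed
qed

lemma bf_DKD:
  assumes "herm D"
  shows "bf (D ** K ** D) x x = bf K (D *v x) (D *v x)"
proof -
  have "(D ** K ** D) *v x = D *v (K *v (D *v x))" by (simp add: matrix_vector_mul_assoc matrix_mul_assoc)
  then have "bf (D ** K ** D) x x = bf D x (K *v (D *v x))" unfolding bf_def by simp
  also have "\<dots> = bf K (D *v x) (D *v x)" unfolding herm_shift[OF assms] by (simp only: bf_def)
  finally show ?thesis .
qed



lemma sum_pair: "(\<Sum>p\<in>(UNIV::('a::finite \<times> 'b::finite) set). g p) = (\<Sum>x\<in>UNIV. \<Sum>y\<in>UNIV. g (x,y))"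
proof -
  have "(\<Sum>x\<in>UNIV. \<Sum>y\<in>UNIV. g (x,y)) = (\<Sum>(x,y)\<in>UNIV\<times>UNIV. g (x,y))" by (rule sum.cartesian_product)
  then show ?thesis by simp
qed

definition P1 :: "complex^('n::finite \<times> 'n)^('n \<times> 'n) \<Rightarrow> 'n \<Rightarrow> 'n \<Rightarrow> complex" where
  "P1 M a b = (\<Sum>k\<in>UNIV. M$(b,k)$(a,k))"
definition P2 :: "complex^('n::finite \<times> 'n)^('n \<times> 'n) \<Rightarrow> 'n \<Rightarrow> 'n \<Rightarrow> complex" where
  "P2 M a b = (\<Sum>k\<in>UNIV. M$(k,b)$(k,a))"

lemma trace_mult_expand:
  "trace (M ** X) = (\<Sum>p\<in>UNIV. \<Sum>q\<in>UNIV. M$p$q * X$q$p)"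
  unfolding trace_def matrix_matrix_mult_def by simp

lemma scaleR_comp: "(r *\<^sub>R H)$i$j = of_real r * (H$i$j :: complex)"
  unfolding vector_scaleR_component by (rule scaleR_conv_of_real)

lemma sum_delta_m: "(\<Sum>j\<in>(UNIV::'a::finite set). f j * ((if j = a then 1 else 0) * g j)) = f a * (g a::'b::comm_ring_1)"
proof -
  have "(\<Sum>j\<in>(UNIV::'a set). f j * ((if j = a then 1 else 0) * g j)) = (\<Sum>j\<in>UNIV. if j = a then f j * g j else 0)"
    by (rule sum.cong) auto
  then show ?thesis by simp
qed

lemma trace_kron1:
  fixes M :: "complex^('n::finite \<times> 'n)^('n \<times> 'n)"
  shows "trace (M ** kron A (mat 1)) = (\<Sum>a\<in>UNIV. \<Sum>b\<in>UNIV. A$a$b * P1 M a b)"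
proof -
  have "trace (M ** kron A (mat 1)) = (\<Sum>p1\<in>UNIV. \<Sum>p2\<in>UNIV. \<Sum>q1\<in>UNIV. \<Sum>q2\<in>UNIV.
           M$(p1,p2)$(q1,q2) * A$q1$p1 * (if q2 = p2 then 1 else 0))"
    unfolding trace_mult_expand sum_pair kron_def by (simp add: mat_def mult.assoc)
  also have "\<dots> = (\<Sum>p1\<in>UNIV. \<Sum>p2\<in>UNIV. \<Sum>q1\<in>UNIV. M$(p1,p2)$(q1,p2) * A$q1$p1)"
    by (simp add: sum_delta_r)
  also have "\<dots> = (\<Sum>p1\<in>UNIV. \<Sum>q1\<in>UNIV. \<Sum>p2\<in>UNIV. M$(p1,p2)$(q1,p2) * A$q1$p1)"
    by (intro sum.cong refl sum.swap)
  also have "\<dots> = (\<Sum>q1\<in>UNIV. \<Sum>p1\<in>UNIV. \<Sum>p2\<in>UNIV. M$(p1,p2)$(q1,p2) * A$q1$p1)"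
    by (rule sum.swap)
  also have "\<dots> = (\<Sum>a\<in>UNIV. \<Sum>b\<in>UNIV. A$a$b * P1 M a b)"
    unfolding P1_def by (simp add: sum_distrib_left mult.commute)
  finally show ?thesis .
qed

lemma trace_kron2:
  fixes M :: "complex^('n::finite \<times> 'n)^('n \<times> 'n)"
  shows "trace (M ** kron (mat 1) B) = (\<Sum>a\<in>UNIV. \<Sum>b\<in>UNIV. B$a$b * P2 M a b)"
proof -
  have "trace (M ** kron (mat 1) B) = (\<Sum>p1\<in>UNIV. \<Sum>p2\<in>UNIV. \<Sum>q1\<in>UNIV. \<Sum>q2\<in>UNIV.
           M$(p1,p2)$(q1,q2) * ((if q1 = p1 then 1 else 0) * B$q2$p2))"
    unfolding trace_mult_expand sum_pair kron_def by (simp add: mat_def)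
  also have "\<dots> = (\<Sum>p1\<in>UNIV. \<Sum>p2\<in>UNIV. \<Sum>q2\<in>UNIV. \<Sum>q1\<in>UNIV.
           M$(p1,p2)$(q1,q2) * ((if q1 = p1 then 1 else 0) * B$q2$p2))"
    by (intro sum.cong refl sum.swap)
  also have "\<dots> = (\<Sum>p1\<in>UNIV. \<Sum>p2\<in>UNIV. \<Sum>q2\<in>UNIV. M$(p1,p2)$(p1,q2) * B$q2$p2)"
    by (simp only: sum_delta_m)
  also have "\<dots> = (\<Sum>p2\<in>UNIV. \<Sum>p1\<in>UNIV. \<Sum>q2\<in>UNIV. M$(p1,p2)$(p1,q2) * B$q2$p2)"
    by (rule sum.swap)
  also have "\<dots> = (\<Sum>p2\<in>UNIV. \<Sum>q2\<in>UNIV. \<Sum>p1\<in>UNIV. M$(p1,p2)$(p1,q2) * B$q2$p2)"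
    by (intro sum.cong refl sum.swap)
  also have "\<dots> = (\<Sum>q2\<in>UNIV. \<Sum>p2\<in>UNIV. \<Sum>p1\<in>UNIV. M$(p1,p2)$(p1,q2) * B$q2$p2)"
    by (rule sum.swap)
  also have "\<dots> = (\<Sum>a\<in>UNIV. \<Sum>b\<in>UNIV. B$a$b * P2 M a b)"
    unfolding P2_def by (simp add: sum_distrib_left mult.commute)
  finally show ?thesis .
qed

lemma trace_eq_P1: 
  fixes M :: "complex^('n::finite \<times> 'n)^('n \<times> 'n)"
  shows "trace M = (\<Sum>a\<in>UNIV. P1 M a a)"
  unfolding trace_def P1_def sum_pair ..

lemma trace_eq_P2: 
  fixes M :: "complex^('n::finite \<times> 'n)^('n \<times> 'n)"
  shows "trace M = (\<Sum>a\<in>UNIV. P2 M a a)"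
  unfolding trace_def P2_def sum_pair by (rule sum.swap)

lemma trace_lin:
  "trace ((D + r *\<^sub>R H) ** X) = trace (D ** X) + r *\<^sub>R trace (H ** (X::complex^'k^'k))"
  unfolding trace_mult_expand
  by (simp add: distrib_right sum.distrib scale_sum_right)

lemma trace_lin':
  "trace ((D - r *\<^sub>R H) ** X) = trace (D ** X) - r *\<^sub>R trace (H ** (X::complex^'k^'k))"
  unfolding trace_mult_expand
  by (simp add: left_diff_distrib sum_subtractf scale_sum_right)

lemma bf_lin: "bf (D + r *\<^sub>R H) x x = bf D x x + r *\<^sub>R bf H x x"
  unfolding bf_expand
  by (simp add: distrib_left distrib_right sum.distrib scale_sum_right)

lemma bf_lin': "bf (D - r *\<^sub>R H) x x = bf D x x - r *\<^sub>R bf H x x"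
  unfolding bf_expand
  by (simp add: left_diff_distrib right_diff_distrib sum_subtractf scale_sum_right)



lemma real_pert:
  fixes R u P e :: real
  assumes "0 \<le> R" "\<bar>u\<bar> \<le> P * R" "0 \<le> P" "e = 1 / (P + 1)"
  shows "0 \<le> R + e * u" "0 \<le> R - e * u"
proof -
  have e0: "0 < e" using assms(3,4) by simp
  have eP: "e * P \<le> 1" using assms(3,4) by (simp add: divide_le_eq_1)
  have "e * \<bar>u\<bar> \<le> e * (P * R)" using assms(2) e0 by (intro mult_left_mono) auto
  also have "\<dots> = (e * P) * R" by (simp only: mult.assoc)
  also have "\<dots> \<le> 1 * R" using eP assms(1) by (intro mult_right_mono) auto
  finally have a: "e * \<bar>u\<bar> \<le> R" by simp
  have b: "\<bar>e * u\<bar> = e * \<bar>u\<bar>" using e0 by (simp add: abs_mult)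
  show "0 \<le> R + e * u" using a b by linarith
  show "0 \<le> R - e * u" using a b by linarith
qed

lemma herm_Im_zero: "herm H \<Longrightarrow> Im (bf H x x) = 0"
  using bf_herm_sym[of H x x] by (metis cnj.sel(2) complex_eq_iff neg_equal_zero)

lemma perturb_psd:
  assumes D: "psd D" and H: "H = D ** K ** D" "herm H"
  defines "e \<equiv> 1 / (msum K * msum D + 1)"
  shows "psd (D + e *\<^sub>R H)" "psd (D - e *\<^sub>R H)" "e > 0"
proof -
  have hD: "herm D" using D by (rule psd_herm')
  have P0: "0 \<le> msum K * msum D" using msum_nonneg[of K] msum_nonneg[of D] by (rule mult_nonneg_nonneg)
  show "e > 0" unfolding e_def using P0 by simp
  have key: "0 \<le> Re (bf D x x) + e * Re (bf H x x) \<and> 0 \<le> Re (bf D x x) - e * Re (bf H x x)" for x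
  proof -
    have R0: "0 \<le> Re (bf D x x)" using D unfolding psd_bf by blast
    have "\<bar>Re (bf H x x)\<bar> \<le> cmod (bf H x x)" by (rule abs_Re_le_cmod)
    also have "\<dots> = cmod (bf K (D *v x) (D *v x))" unfolding H(1) bf_DKD[OF hD] ..
    also have "\<dots> \<le> msum K * nsq (D *v x)" by (rule bf_bound)
    also have "\<dots> \<le> msum K * (msum D * Re (bf D x x))"
      by (intro mult_left_mono nsq_bound D msum_nonneg)
    also have "\<dots> = (msum K * msum D) * Re (bf D x x)" by (simp only: mult.assoc)
    finally have u: "\<bar>Re (bf H x x)\<bar> \<le> (msum K * msum D) * Re (bf D x x)" .
    show ?thesis using real_pert[OF R0 u P0 e_def[THEN meta_eq_to_obj_eq]] by simp
  qed
  show "psd (D + e *\<^sub>R H)" unfolding psd_bf bf_lin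
    using key herm_Im_zero[OF H(2)] D unfolding psd_bf by simp
  show "psd (D - e *\<^sub>R H)" unfolding psd_bf bf_lin'
    using key herm_Im_zero[OF H(2)] D unfolding psd_bf by simp
qed

lemma trace_lin0: "trace (D + r *\<^sub>R H) = trace D + r *\<^sub>R trace (H :: complex^'k^'k)"
  unfolding trace_def by (simp add: sum.distrib scale_sum_right)
lemma trace_lin0': "trace (D - r *\<^sub>R H) = trace D - r *\<^sub>R trace (H :: complex^'k^'k)"
  unfolding trace_def by (simp add: sum_subtractf scale_sum_right)

lemma gamma_perturb:
  fixes D H :: "complex^('n::finite \<times> 'n)^('n \<times> 'n)"
  assumes G: "D \<in> Gamma" and P: "\<And>a b. P1 H a b = 0" "\<And>a b. P2 H a b = 0"
    and psd: "psd (D + r *\<^sub>R H)" "psd (D - r *\<^sub>R H)"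
  shows "D + r *\<^sub>R H \<in> Gamma" "D - r *\<^sub>R H \<in> Gamma"
proof -
  have tH: "trace H = 0" unfolding trace_eq_P1 P by simp
  have t1: "trace (H ** kron A (mat 1)) = 0" for A unfolding trace_kron1 P by simp
  have t2: "trace (H ** kron (mat 1) B) = 0" for B unfolding trace_kron2 P by simp
  show "D + r *\<^sub>R H \<in> Gamma" using G psd(1) unfolding Gamma_def density_def
    by (simp add: trace_lin0 trace_lin tH t1 t2)
  show "D - r *\<^sub>R H \<in> Gamma" using G psd(2) unfolding Gamma_def density_def
    by (simp add: trace_lin0' trace_lin' tH t1 t2)
qed

lemma not_extreme:
  fixes D H :: "complex^('n::finite \<times> 'n)^('n \<times> 'n)"
  assumes ext: "D extreme_point_of Gamma" and K: "H = D ** K ** D" "herm H" "H \<noteq> 0"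
    and P: "\<And>a b. P1 H a b = 0" "\<And>a b. P2 H a b = 0"
  shows False
proof -
  have G: "D \<in> Gamma" using ext unfolding extreme_point_of_def by blast
  then have D: "psd D" unfolding Gamma_def density_def by blast
  define e where "e = 1 / (msum K * msum D + 1)"
  have ps: "psd (D + e *\<^sub>R H)" "psd (D - e *\<^sub>R H)" "e > 0"
    using perturb_psd[OF D K(1,2)] unfolding e_def by auto
  have a: "D + e *\<^sub>R H \<in> Gamma" "D - e *\<^sub>R H \<in> Gamma"
    using gamma_perturb[OF G P ps(1,2)] by auto
  have ne: "D + e *\<^sub>R H \<noteq> D - e *\<^sub>R H"
  proof
    assume "D + e *\<^sub>R H = D - e *\<^sub>R H"
    then have "e *\<^sub>R H = - (e *\<^sub>R H)" by (simp add: algebra_simps)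
    then have "e *\<^sub>R H + e *\<^sub>R H = 0" by (metis add.right_inverse)
    then have "(e + e) *\<^sub>R H = 0" by (simp only: scaleR_left_distrib)
    then have "e + e = 0 \<or> H = 0" by (simp only: scaleR_eq_0_iff)
    then show False using ps(3) K(3) by linarith
  qed
  have m: "midpoint (D + e *\<^sub>R H) (D - e *\<^sub>R H) = D"
    unfolding midpoint_def by (simp add: scaleR_2[symmetric] algebra_simps)
  have "D \<in> open_segment (D + e *\<^sub>R H) (D - e *\<^sub>R H)"
    using midpoint_in_open_segment[of "D + e *\<^sub>R H" "D - e *\<^sub>R H"] ne unfolding m by simp
  then show False using ext a unfolding extreme_point_of_def by blast
qed



lemma DKD_entry: "(D ** X ** D)$i$j = (\<Sum>k\<in>UNIV. \<Sum>l\<in>UNIV. D$i$k * X$k$l * D$l$j)"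
proof -
  have "(D ** X ** D)$i$j = (\<Sum>l\<in>UNIV. \<Sum>k\<in>UNIV. D$i$k * X$k$l * D$l$j)"
    unfolding matrix_matrix_mult_def by (simp add: sum_distrib_right)
  also have "\<dots> = (\<Sum>k\<in>UNIV. \<Sum>l\<in>UNIV. D$i$k * X$k$l * D$l$j)" by (rule sum.swap)
  finally show ?thesis .
qed

lemma adj_entry:
  assumes "herm D"
  shows "(\<Sum>k\<in>UNIV. \<Sum>l\<in>UNIV. D$a$k * cnj (K$l$k) * D$l$b) = cnj ((D ** K ** D)$b$a)"
proof -
  have c: "\<And>i j. cnj (D$i$j) = D$j$i" using herm_cnj[OF assms] .
  have "cnj ((D ** K ** D)$b$a) = (\<Sum>l\<in>UNIV. \<Sum>k\<in>UNIV. D$l$b * cnj (K$l$k) * D$a$k)"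
    unfolding DKD_entry by (simp add: c)
  also have "\<dots> = (\<Sum>k\<in>UNIV. \<Sum>l\<in>UNIV. D$l$b * cnj (K$l$k) * D$a$k)" by (rule sum.swap)
  also have "\<dots> = (\<Sum>k\<in>UNIV. \<Sum>l\<in>UNIV. D$a$k * cnj (K$l$k) * D$l$b)"
    by (intro sum.cong refl) (simp only: mult.commute mult.left_commute)
  finally show ?thesis by simp
qed

lemma herm_part:
  fixes D K :: "complex^('n::finite \<times> 'n)^('n \<times> 'n)"
  assumes hD: "herm D" and M: "M = D ** K ** D" "M \<noteq> 0"
    and P: "\<And>a b. P1 M a b = 0" "\<And>a b. P2 M a b = 0"
  shows "\<exists>K'. herm (D ** K' ** D) \<and> D ** K' ** D \<noteq> 0 \<and> (\<forall>a b. P1 (D ** K' ** D) a b = 0)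
              \<and> (\<forall>a b. P2 (D ** K' ** D) a b = 0)"
proof -
  define K1 where "K1 = (\<chi> i j. K$i$j + cnj (K$j$i))"
  define K2 where "K2 = (\<chi> i j. \<i> * (K$i$j - cnj (K$j$i)))"
  have e1: "(D ** K1 ** D)$a$b = M$a$b + cnj (M$b$a)" for a b
  proof -
    have "(D ** K1 ** D)$a$b = (\<Sum>k\<in>UNIV. \<Sum>l\<in>UNIV. D$a$k * K$k$l * D$l$b + D$a$k * cnj (K$l$k) * D$l$b)"
      unfolding DKD_entry K1_def by (simp add: distrib_left distrib_right)
    also have "\<dots> = M$a$b + cnj (M$b$a)"
      unfolding sum.distrib adj_entry[OF hD] M(1) DKD_entry[of D K a b] ..
    finally show ?thesis .
  qed
  have e2: "(D ** K2 ** D)$a$b = \<i> * (M$a$b - cnj (M$b$a))" for a b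
  proof -
    have "(D ** K2 ** D)$a$b = \<i> * (\<Sum>k\<in>UNIV. \<Sum>l\<in>UNIV. D$a$k * K$k$l * D$l$b - D$a$k * cnj (K$l$k) * D$l$b)"
      unfolding DKD_entry K2_def by (simp add: right_diff_distrib left_diff_distrib sum_distrib_left mult_ac)
    also have "\<dots> = \<i> * (M$a$b - cnj (M$b$a))"
      unfolding sum_subtractf adj_entry[OF hD] M(1) DKD_entry[of D K a b] ..
    finally show ?thesis .
  qed
  have h1: "herm (D ** K1 ** D)" unfolding herm_def e1 by simp
  have h2: "herm (D ** K2 ** D)" unfolding herm_def e2 by (simp add: right_diff_distrib)
  have p11: "P1 (D ** K1 ** D) a b = 0" for a b
    using P(1)[of a b] P(1)[of b a] unfolding P1_def e1 by (simp add: sum.distrib cnj_sum[symmetric] del: cnj_sum)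
  have p12: "P2 (D ** K1 ** D) a b = 0" for a b
    using P(2)[of a b] P(2)[of b a] unfolding P2_def e1 by (simp add: sum.distrib cnj_sum[symmetric] del: cnj_sum)
  have p21: "P1 (D ** K2 ** D) a b = 0" for a b
    using P(1)[of a b] P(1)[of b a] unfolding P1_def e2 by (simp add: sum_distrib_left[symmetric] sum_subtractf cnj_sum[symmetric] del: cnj_sum)
  have p22: "P2 (D ** K2 ** D) a b = 0" for a b
    using P(2)[of a b] P(2)[of b a] unfolding P2_def e2 by (simp add: sum_distrib_left[symmetric] sum_subtractf cnj_sum[symmetric] del: cnj_sum)
  show ?thesis
  proof (cases "D ** K1 ** D = 0")
    case False then show ?thesis using h1 p11 p12 by blast
  next
    case True
    show ?thesis
    proof (cases "D ** K2 ** D = 0")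
      case False then show ?thesis using h2 p21 p22 by blast
    next
      case True2: True
      have "M$a$b = 0" for a b
      proof -
        have "M$a$b + cnj (M$b$a) = 0" using e1[of a b] True by simp
        moreover have "\<i> * (M$a$b - cnj (M$b$a)) = 0" using e2[of a b] True2 by simp
        ultimately show ?thesis by simp
      qed
      then have "M = 0" by (simp add: vec_eq_iff)
      then show ?thesis using M(2) by blast
    qed
  qed
qed



definition Lmap :: "complex^('n::finite \<times> 'n)^('n \<times> 'n) \<Rightarrow> complex^(('n \<times> 'n) + ('n \<times> 'n))" where
  "Lmap M = (\<chi> z. case z of Inl ab \<Rightarrow> P1 M (fst ab) (snd ab) | Inr ab \<Rightarrow> P2 M (fst ab) (snd ab))"

definition Kof :: "complex^('k \<times> 'k) \<Rightarrow> complex^'k^'k" where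
  "Kof c = (\<chi> j l. c$(j,l))"

definition Ssp :: "(complex^(('n::finite \<times> 'n) + ('n \<times> 'n))) set" where
  "Ssp = {v. (\<Sum>a\<in>UNIV. v$Inl (a,a)) = (\<Sum>a\<in>UNIV. v$Inr (a,a))}"

lemma Lmap_in: "Lmap M \<in> Ssp"
proof -
  have "(\<Sum>a\<in>UNIV. (Lmap M)$Inl (a,a)) = trace M" unfolding trace_eq_P1 Lmap_def by simp
  moreover have "(\<Sum>a\<in>UNIV. (Lmap M)$Inr (a,a)) = trace M" unfolding trace_eq_P2 Lmap_def by simp
  ultimately show ?thesis unfolding Ssp_def by simp
qed

lemma Lmap_zero: "Lmap M = 0 \<Longrightarrow> P1 M a b = 0 \<and> P2 M a b = 0"
proof -
  assume "Lmap M = 0"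
  then have "(Lmap M)$Inl (a,b) = 0" "(Lmap M)$Inr (a,b) = 0" by simp_all
  then show ?thesis unfolding Lmap_def by simp
qed

lemma Ssp_subspace: "vec.subspace Ssp"
  unfolding vec.subspace_def Ssp_def by (simp add: sum.distrib sum_distrib_left[symmetric])

lemma Ssp_dim: "vec.dim (Ssp :: (complex^(('n::finite \<times> 'n) + ('n \<times> 'n))) set) < 2 * CARD('n)^2"
proof -
  obtain a0 :: 'n where True by blast
  have notin: "axis (Inl (a0,a0)) 1 \<notin> (Ssp :: (complex^(('n \<times> 'n) + ('n \<times> 'n))) set)"
  proof -
    have "(\<Sum>a\<in>UNIV. (axis (Inl (a0,a0)) 1 :: complex^(('n \<times> 'n) + ('n \<times> 'n)))$Inl (a,a)) = (\<Sum>a\<in>UNIV. if a = a0 then 1 else 0)"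
      by (intro sum.cong refl) (auto simp: axis_def)
    also have "\<dots> = 1" by simp
    finally have 1: "(\<Sum>a\<in>UNIV. (axis (Inl (a0,a0)) 1 :: complex^(('n \<times> 'n) + ('n \<times> 'n)))$Inl (a,a)) = 1" .
    have 2: "(\<Sum>a\<in>UNIV. (axis (Inl (a0,a0)) 1 :: complex^(('n \<times> 'n) + ('n \<times> 'n)))$Inr (a,a)) = 0"
      by (simp add: axis_def)
    show ?thesis unfolding Ssp_def using 1 2 by simp
  qed
  have sp: "vec.span Ssp = Ssp" using Ssp_subspace by simp
  have "vec.span Ssp \<subset> vec.span (UNIV :: (complex^(('n \<times> 'n) + ('n \<times> 'n))) set)"
    unfolding sp vec.span_UNIV using notin by blast
  then have "vec.dim (Ssp :: (complex^(('n \<times> 'n) + ('n \<times> 'n))) set) < vec.dim (UNIV :: (complex^(('n \<times> 'n) + ('n \<times> 'n))) set)"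
    by (rule vec.dim_psubset)
  moreover have "vec.dim (UNIV :: (complex^(('n \<times> 'n) + ('n \<times> 'n))) set) = CARD(('n \<times> 'n) + ('n \<times> 'n))"
    by (rule vec_dim_card)
  moreover have "CARD(('n \<times> 'n) + ('n \<times> 'n)) = 2 * CARD('n)^2"
    by (simp add: card_UNIV_sum power2_eq_square)
  ultimately show ?thesis by linarith
qed

definition Phi :: "complex^('n \<times> 'n)^('n \<times> 'n) \<Rightarrow> complex^(('n::finite \<times> 'n) \<times> ('n \<times> 'n)) \<Rightarrow> complex^(('n \<times> 'n) + ('n \<times> 'n))" where
  "Phi D c = Lmap (D ** Kof c ** D)"

lemma P1_DKD: "P1 (D ** Kof c ** D) a b = (\<Sum>k\<in>UNIV. \<Sum>p\<in>UNIV. \<Sum>q\<in>UNIV. D$(b,k)$p * c$(p,q) * D$q$(a,k))"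
  unfolding P1_def DKD_entry Kof_def by simp
lemma P2_DKD: "P2 (D ** Kof c ** D) a b = (\<Sum>k\<in>UNIV. \<Sum>p\<in>UNIV. \<Sum>q\<in>UNIV. D$(k,b)$p * c$(p,q) * D$q$(k,a))"
  unfolding P2_def DKD_entry Kof_def by simp

lemma Phi_linear: "Vector_Spaces.linear (*s) (*s) (Phi D)"
proof -
  have add: "Phi D (x + y) = Phi D x + Phi D y" for x y
    unfolding Phi_def Lmap_def vec_eq_iff
    by (auto split: sum.split simp: P1_DKD P2_DKD distrib_left distrib_right sum.distrib)
  have sc: "Phi D (s *s x) = s *s Phi D x" for s x
    unfolding Phi_def Lmap_def vec_eq_iff
    by (auto split: sum.split simp: P1_DKD P2_DKD sum_distrib_left mult_ac)
  show ?thesis unfolding Vector_Spaces.linear_iff by (intro conjI allI add sc vec.vector_space_axioms)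
qed



lemma sum_restrict: "(\<And>x. x \<notin> J \<Longrightarrow> f x = 0) \<Longrightarrow> (\<Sum>x\<in>(UNIV::'a::finite set). f x) = (\<Sum>x\<in>J. f x)"
  by (rule sum.mono_neutral_right) auto

lemma rows_basis:
  fixes D :: "complex^'k^'k"
  obtains J where "card J = rank D"
    "\<And>f. (\<Sum>j\<in>J. f j *s row j D) = 0 \<Longrightarrow> (\<forall>j\<in>J. f j = 0)"
proof -
  obtain B where B: "B \<subseteq> rows D" "vec.independent B" "rows D \<subseteq> vec.span B"
    by (rule vec.maximal_independent_subset)
  have cB: "card B = rank D" unfolding row_rank_def_gen by (rule vec.basis_card_eq_dim[OF B(1) B(3) B(2)])
  define g where "g u = (SOME i. u = row i D)" for u
  have gr: "row (g u) D = u" if "u \<in> B" for u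
  proof -
    have "\<exists>i. u = row i D" using that B(1) unfolding rows_def by blast
    then have "u = row (g u) D" unfolding g_def by (rule someI_ex)
    then show ?thesis by simp
  qed
  have inj: "inj_on g B" by (metis gr inj_onI)
  have cJ: "card (g ` B) = rank D" using card_image[OF inj] cB by simp
  have RI: "\<forall>j\<in>g ` B. f j = 0" if h: "(\<Sum>j\<in>g ` B. f j *s row j D) = 0" for f
  proof -
    have "(\<Sum>u\<in>B. f (g u) *s u) = (\<Sum>u\<in>B. f (g u) *s row (g u) D)" by (intro sum.cong refl) (simp add: gr)
    also have "\<dots> = (\<Sum>j\<in>g ` B. f j *s row j D)" by (rule sum.reindex[OF inj, symmetric, unfolded comp_def])
    finally have "(\<Sum>u\<in>B. f (g u) *s u) = 0" using h by simp
    moreover have ie: "\<forall>c. (\<Sum>v\<in>B. c v *s v) = 0 \<longrightarrow> (\<forall>v\<in>B. c v = 0)"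
      using B(2) unfolding vec.independent_explicit by blast
    ultimately have "\<forall>u\<in>B. f (g u) = 0" using ie[rule_format, of "\<lambda>u. f (g u)"] by blast
    then show ?thesis by blast
  qed
  show ?thesis using that[OF cJ] RI by blast
qed

lemma nonzero_DKD:
  fixes D :: "complex^'k^'k" and c :: "complex^('k \<times> 'k)"
  assumes hD: "herm D"
    and RI: "\<And>f. (\<Sum>j\<in>J. f j *s row j D) = 0 \<Longrightarrow> (\<forall>j\<in>J. f j = 0)"
    and W: "\<And>p. p \<notin> J \<times> J \<Longrightarrow> c$p = 0"
    and Z: "D ** Kof c ** D = 0"
  shows "c = 0"
proof -
  define f where "f a l = (\<Sum>j\<in>J. D$a$j * c$(j,l))" for a l
  have E: "(D ** Kof c ** D)$a$b = (\<Sum>l\<in>J. f a l * D$l$b)" for a b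
  proof -
    have "(D ** Kof c ** D)$a$b = (\<Sum>j\<in>UNIV. \<Sum>l\<in>UNIV. D$a$j * c$(j,l) * D$l$b)"
      unfolding DKD_entry Kof_def by simp
    also have "\<dots> = (\<Sum>j\<in>UNIV. \<Sum>l\<in>J. D$a$j * c$(j,l) * D$l$b)"
      by (intro sum.cong refl sum_restrict) (simp add: W)
    also have "\<dots> = (\<Sum>j\<in>J. \<Sum>l\<in>J. D$a$j * c$(j,l) * D$l$b)"
      by (intro sum_restrict) (simp add: W)
    also have "\<dots> = (\<Sum>l\<in>J. \<Sum>j\<in>J. D$a$j * c$(j,l) * D$l$b)" by (rule sum.swap)
    also have "\<dots> = (\<Sum>l\<in>J. f a l * D$l$b)" unfolding f_def by (simp add: sum_distrib_right)
    finally show ?thesis .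
  qed
  have f0: "f a l = 0" if "l \<in> J" for a l
  proof -
    have "(\<Sum>l\<in>J. f a l *s row l D) = 0"
      unfolding vec_eq_iff using E Z by (simp add: row_def)
    then show ?thesis using RI[of "\<lambda>l. f a l"] that by blast
  qed
  have cJ: "c$(j,l) = 0" if "j \<in> J" "l \<in> J" for j l
  proof -
    have "(\<Sum>j\<in>J. cnj (c$(j,l)) *s row j D) = 0"
    proof (unfold vec_eq_iff, intro allI)
      fix a
      have "(\<Sum>j\<in>J. cnj (c$(j,l)) *s row j D)$a = cnj (f a l)"
        unfolding f_def by (simp add: row_def herm_cnj[OF hD] mult.commute)
      then show "(\<Sum>j\<in>J. cnj (c$(j,l)) *s row j D)$a = 0$a" using f0[OF that(2)] by simp
    qed
    then have "cnj (c$(j,l)) = 0" using RI[of "\<lambda>j. cnj (c$(j,l))"] that(1) by blast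
    then show ?thesis by simp
  qed
  show ?thesis unfolding vec_eq_iff
  proof
    fix p :: "'k \<times> 'k"
    obtain j l where p: "p = (j,l)" by (cases p)
    show "c$p = 0$p" using cJ W unfolding p by (cases "j \<in> J \<and> l \<in> J") auto
  qed
qed

lemma kernel:
  fixes D :: "complex^('n::finite \<times> 'n)^('n \<times> 'n)"
  assumes hD: "herm D" and big: "\<not> (rank D ^ 2 \<le> 2 * CARD('n)^2 - 1)"
  shows "\<exists>K. D ** K ** D \<noteq> 0 \<and> (\<forall>a b. P1 (D ** K ** D) a b = 0) \<and> (\<forall>a b. P2 (D ** K ** D) a b = 0)"
proof -
  obtain J where cJ: "card J = rank D"
    and RI: "\<And>f. (\<Sum>j\<in>J. f j *s row j D) = 0 \<Longrightarrow> (\<forall>j\<in>J. f j = 0)"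
    by (rule rows_basis[of D]) blast
  define E where "E = (\<lambda>p. axis p (1::complex)) ` (J \<times> J)"
  have EE: "(E :: (complex^(('n \<times> 'n) \<times> ('n \<times> 'n))) set) \<subseteq> cart_basis"
    unfolding E_def cart_basis_def by blast
  have indE: "vec.independent E" by (rule vec.independent_mono[OF independent_cart_basis EE])
  have injax: "inj_on (\<lambda>p. axis p (1::complex) :: complex^(('n \<times> 'n) \<times> ('n \<times> 'n))) (J \<times> J)"
    by (rule inj_onI) (simp add: axis_eq_axis)
  have cardE: "card E = rank D ^ 2"
    unfolding E_def card_image[OF injax] card_cartesian_product cJ by (simp add: power2_eq_square)
  define W where "W = {c :: complex^(('n \<times> 'n) \<times> ('n \<times> 'n)). \<forall>p. p \<notin> J \<times> J \<longrightarrow> c$p = 0}"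
  have subW: "vec.subspace W" unfolding vec.subspace_def W_def by simp
  have EW: "E \<subseteq> W" unfolding E_def W_def by (auto simp: axis_def)
  have spW: "vec.span E \<subseteq> W" by (rule vec.span_minimal[OF EW subW])
  have lin: "Vector_Spaces.linear (*s) (*s) (Phi D)" by (rule Phi_linear)
  have ninj: "\<not> inj_on (Phi D) (vec.span E)"
  proof
    assume inj: "inj_on (Phi D) (vec.span E)"
    have ind: "vec.independent (Phi D ` E)"
      by (rule vec.linear_independent_injective_image[OF lin indE inj])
    have "card (Phi D ` E) = card E"
      by (rule card_image[OF inj_on_subset[OF inj vec.span_superset]])
    moreover have "Phi D ` E \<subseteq> Ssp" unfolding Phi_def using Lmap_in by blast
    then have "card (Phi D ` E) \<le> vec.dim (Ssp :: (complex^(('n \<times> 'n) + ('n \<times> 'n))) set)"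
      using vec.independent_card_le_dim ind by blast
    ultimately have "rank D ^ 2 < 2 * CARD('n)^2" using Ssp_dim[where 'n='n] cardE by linarith
    then show False using big by linarith
  qed
  then obtain x y where xy: "x \<in> vec.span E" "y \<in> vec.span E" "x \<noteq> y" "Phi D x = Phi D y"
    unfolding inj_on_def by blast
  define c where "c = x - y"
  have c0: "c \<noteq> 0" unfolding c_def using xy(3) by simp
  have cW: "c \<in> W" unfolding c_def using spW vec.span_diff[OF xy(1,2)] by blast
  have Pc: "Phi D c = 0" unfolding c_def vec.linear_diff[OF lin] xy(4) by simp
  have L0: "Lmap (D ** Kof c ** D) = 0" using Pc unfolding Phi_def .
  have M0: "D ** Kof c ** D \<noteq> 0"
  proof
    assume "D ** Kof c ** D = 0"
    then have "c = 0" using nonzero_DKD[OF hD RI] cW unfolding W_def by blast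
    then show False using c0 by simp
  qed
  show ?thesis using M0 Lmap_zero[OF L0] by blast
qed

theorem mainTheorem2:
  fixes \<rho> :: "complex^('n::finite \<times> 'n)^('n \<times> 'n)"
  assumes "\<rho> extreme_point_of (Gamma :: (complex^('n \<times> 'n)^('n \<times> 'n)) set)"
  shows "real (rank \<rho>) \<le> sqrt (2 * real (CARD('n))^2 - 1)"
proof -
  have G: "\<rho> \<in> Gamma" using assms unfolding extreme_point_of_def by blast
  then have hD: "herm \<rho>" unfolding Gamma_def density_def using psd_herm' by blast
  have nat: "rank \<rho> ^ 2 \<le> 2 * CARD('n)^2 - 1"
  proof (rule ccontr)
    assume big: "\<not> rank \<rho> ^ 2 \<le> 2 * CARD('n)^2 - 1"
    obtain K where K: "\<rho> ** K ** \<rho> \<noteq> 0" "\<forall>a b. P1 (\<rho> ** K ** \<rho>) a b = 0" "\<forall>a b. P2 (\<rho> ** K ** \<rho>) a b = 0"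
      using kernel[OF hD big] by blast
    obtain K' where K': "herm (\<rho> ** K' ** \<rho>)" "\<rho> ** K' ** \<rho> \<noteq> 0"
      "\<forall>a b. P1 (\<rho> ** K' ** \<rho>) a b = 0" "\<forall>a b. P2 (\<rho> ** K' ** \<rho>) a b = 0"
      using herm_part[OF hD refl K(1)] K(2,3) by blast
    show False using not_extreme[OF assms refl K'(1,2)] K'(3,4) by blast
  qed
  have n1: "1 \<le> CARD('n)" using finite_UNIV_card_ge_0[of] by simp
  then have "1 \<le> 2 * CARD('n)^2" by simp
  then have "real (rank \<rho> ^ 2) \<le> real (2 * CARD('n)^2) - 1"
    using nat by linarith
  then have "(real (rank \<rho>))^2 \<le> 2 * real (CARD('n))^2 - 1" by simp
  then show ?thesis by (rule real_le_rsqrt)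
qed

end
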